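(* Let $(X,d,\ll,\le,\tau)$ be a Lorentzian length space. Then: globally hyperbolic $\Rightarrow$ causally simple $\Rightarrow$ causally continuous $\Rightarrow$ stably causal. In addition, if $(X,d)$ is locally compact, then stably causal $\Rightarrow$ strongly causal.
   Context: A causal space $(X,\ll,\le)$ is a set $X$ with two transitive relations $\ll,\le$ such that $\le$ is reflexive and $x\ll y\Rightarrow x\le y$; write $p<q$ if $p\le q$ and $p\neq q$. Set $I^+(x)=\{y: x\ll y\}$, $I^-(x)=\{y: y\ll x\}$, $J^+(x)=\{y:x\le y\}$, $J^-(x)=\{y:y\le x\}$. A Lorentzian pre-length space $(X,d,\ll,\le,\tau)$ is a causal space together with a metric $d$ on $X$ and a function $\tau:X\times X\to[0,\infty]$ that is lower semicontinuous with respect to the topology of $d$, satisfies $\tau(x,z)\ge\tau(x,y)+\tau(y,z)$ whenever $x\le y\le z$, $\tau(x,y)=0$ if $x\not\le y$, and $\tau(x,y)>0\iff x\ll y$. All topological notions refer to the metric topology of $d$. A future directed causal (resp. timelike) curve is a non-constant Lipschitz map $\gamma:I\to X$ ($I\subset\mathbb R$ an interval) with $\gamma(s)\le\gamma(t)$ (resp. $\gamma(s)\ll\gamma(t)$) for all $s<t$. For a future directed causal $\gamma:[a,b]\to X$, $L_\tau(\gamma)=\inf\sum_{i=0}^{N-1}\tau(\gamma(t_i),\gamma(t_{i+1}))$ over all partitions $a=t_0<\dots<t_N=b$. The space is causally path connected if whenever $x\le y$ (resp. $x\ll y$) there is a future directed causal (resp. timelike) curve from $x$ to $y$. For open $U\subset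 X$, $p\le_U q$ means there is a future directed causal curve from $p$ to $q$ with image in $U$. A neighborhood $U$ is causally closed if whenever $p_n\le_U q_n$ with $p_n\to p\in U$, $q_n\to q\in U$, then $p\le_U q$; the space is locally causally closed if every point has a causally closed neighborhood. The space is localizable if every $x$ has a neighborhood $\Omega_x$ such that: (i) all causal curves contained in $\Omega_x$ have uniformly bounded $d$-length; (ii) there is a continuous $\omega_x:\Omega_x\times\Omega_x\to[0,\infty)$ such that $(\Omega_x,d|_{\Omega_x\times\Omega_x},\ll|_{\Omega_x},\le|_{\Omega_x},\omega_x)$ is a Lorentzian pre-length space, and $I^\pm(y)\cap\Omega_x\ne\emptyset$ for every $y\in\Omega_x$; (iii) for all $p,q\in\Omega_x$ with $p<q$ there is a future causal curve $\gamma_{p,q}$ from $p$ to $q$ with $L_\tau(\gamma_{p,q})\ge L_\tau(\gamma)$ for every future causal curve $\gamma\subset\Omega_x$ from $p$ to $q$, and $L_\tau(\gamma_{p,q})=\omega_x(p,q)$. A Lorentzian length space is a causally path connected, locally causally closed, localizable Lorentzian pre-length space with $\tau(x,y)=\sup\{L_\tau(\gamma):\gamma$ a future causal curve from $x$ to $y\}$. Causality notions: causal: $x\le y$, $y\le x\Rightarrow x=y$. Non-totally imprisoning: for every compact $K\subset X$ there is $C\ge0$ bounding the $d$-arclength of every causal curve contained in $K$. Globally hyperbolic: non-totally imprisoning and $J^+(x)\cap J^-(y)$ compact for all $x,y$. Causally simple: causal and $J^\pm(x)$ closed for all $x$. Distinguishing: $I^+(x)=I^+(y)\Rightarrow x=y$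 and $I^-(x)=I^-(y)\Rightarrow x=y$. Reflective: $I^+(x)\subset I^+(y)\Rightarrow I^-(y)\subset I^-(x)$ and $I^-(y)\subset I^-(x)\Rightarrow I^+(x)\subset I^+(y)$ for all $x,y$. Causally continuous: distinguishing and reflective. $K^+$: the smallest transitive, closed (in $X\times X$) relation containing $J^+=\{(x,y):x\le y\}$; stably causal: $K^+$ antisymmetric. Strongly causal: the Alexandrov topology (subbase $\{I^+(x)\cap I^-(y)\}$) coincides with the metric topology of $d$. *)

theory Defs
  imports "HOL-Analysis.Analysis" "HOL-Library.Extended_Nonnegative_Real"
begin

text \<open>Throughout: the point set X is the type 'a, the metric d is the metric dist
  of the type class metric_space.  The relations ll (timelike) and le (causal) are
  binary predicates, tau takes values in [0,\<infinity>] (ennreal).\<close>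

definition causal_space_on :: "'a set \<Rightarrow> ('a \<Rightarrow> 'a \<Rightarrow> bool) \<Rightarrow> ('a \<Rightarrow> 'a \<Rightarrow> bool) \<Rightarrow> bool" where
  "causal_space_on S ll le \<longleftrightarrow>
     (\<forall>x\<in>S. \<forall>y\<in>S. \<forall>z\<in>S. ll x y \<longrightarrow> ll y z \<longrightarrow> ll x z) \<and>
     (\<forall>x\<in>S. \<forall>y\<in>S. \<forall>z\<in>S. le x y \<longrightarrow> le y z \<longrightarrow> le x z) \<and>
     (\<forall>x\<in>S. le x x) \<and>
     (\<forall>x\<in>S. \<forall>y\<in>S. ll x y \<longrightarrow> le x y)"

definition lsc_on :: "('a::metric_space \<times> 'a) set \<Rightarrow> ('a \<times> 'a \<Rightarrow> ennreal) \<Rightarrow> bool" where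
  "lsc_on A f \<longleftrightarrow> (\<forall>z\<in>A. \<forall>c. c < f z \<longrightarrow>
      (\<exists>U. open U \<and> z \<in> U \<and> (\<forall>w\<in>U \<inter> A. c < f w)))"

definition lpls_on :: "'a::metric_space set \<Rightarrow> ('a \<Rightarrow> 'a \<Rightarrow> bool) \<Rightarrow> ('a \<Rightarrow> 'a \<Rightarrow> bool)
    \<Rightarrow> ('a \<Rightarrow> 'a \<Rightarrow> ennreal) \<Rightarrow> bool" where
  "lpls_on S ll le tau \<longleftrightarrow>
     causal_space_on S ll le \<and>
     lsc_on (S \<times> S) (\<lambda>(x,y). tau x y) \<and>
     (\<forall>x\<in>S. \<forall>y\<in>S. \<forall>z\<in>S. le x y \<longrightarrow> le y z \<longrightarrow> tau x z \<ge> tau x y + tau y z) \<and>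
     (\<forall>x\<in>S. \<forall>y\<in>S. \<not> le x y \<longrightarrow> tau x y = 0) \<and>
     (\<forall>x\<in>S. \<forall>y\<in>S. tau x y > 0 \<longleftrightarrow> ll x y)"

abbreviation lpls :: "('a::metric_space \<Rightarrow> 'a \<Rightarrow> bool) \<Rightarrow> ('a \<Rightarrow> 'a \<Rightarrow> bool)
    \<Rightarrow> ('a \<Rightarrow> 'a \<Rightarrow> ennreal) \<Rightarrow> bool" where
  "lpls ll le tau \<equiv> lpls_on UNIV ll le tau"

definition Ifut :: "('a \<Rightarrow> 'a \<Rightarrow> bool) \<Rightarrow> 'a \<Rightarrow> 'a set" where "Ifut ll x = {y. ll x y}"
definition Ipast :: "('a \<Rightarrow> 'a \<Rightarrow> bool) \<Rightarrow> 'a \<Rightarrow> 'a set" where "Ipast ll x = {y. ll y x}"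
definition Jfut :: "('a \<Rightarrow> 'a \<Rightarrow> bool) \<Rightarrow> 'a \<Rightarrow> 'a set" where "Jfut le x = {y. le x y}"
definition Jpast :: "('a \<Rightarrow> 'a \<Rightarrow> bool) \<Rightarrow> 'a \<Rightarrow> 'a set" where "Jpast le x = {y. le y x}"

definition fd_causal_curve :: "('a::metric_space \<Rightarrow> 'a \<Rightarrow> bool) \<Rightarrow> real set \<Rightarrow> (real \<Rightarrow> 'a) \<Rightarrow> bool" where
  "fd_causal_curve le I \<gamma> \<longleftrightarrow> is_interval I \<and> (\<exists>C. C-lipschitz_on I \<gamma>) \<and>
     (\<exists>s\<in>I. \<exists>t\<in>I. \<gamma> s \<noteq> \<gamma> t) \<and> (\<forall>s\<in>I. \<forall>t\<in>I. s < t \<longrightarrow> le (\<gamma> s) (\<gamma> t))"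

definition fd_timelike_curve :: "('a::metric_space \<Rightarrow> 'a \<Rightarrow> bool) \<Rightarrow> real set \<Rightarrow> (real \<Rightarrow> 'a) \<Rightarrow> bool" where
  "fd_timelike_curve ll I \<gamma> \<longleftrightarrow> is_interval I \<and> (\<exists>C. C-lipschitz_on I \<gamma>) \<and>
     (\<exists>s\<in>I. \<exists>t\<in>I. \<gamma> s \<noteq> \<gamma> t) \<and> (\<forall>s\<in>I. \<forall>t\<in>I. s < t \<longrightarrow> ll (\<gamma> s) (\<gamma> t))"

definition causal_curve_from_to :: "('a::metric_space \<Rightarrow> 'a \<Rightarrow> bool) \<Rightarrow> real \<Rightarrow> real \<Rightarrow> (real \<Rightarrow> 'a) \<Rightarrow> 'a \<Rightarrow> 'a \<Rightarrow> bool" where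
  "causal_curve_from_to le a b \<gamma> p q \<longleftrightarrow> a < b \<and> fd_causal_curve le {a..b} \<gamma> \<and> \<gamma> a = p \<and> \<gamma> b = q"

definition timelike_curve_from_to :: "('a::metric_space \<Rightarrow> 'a \<Rightarrow> bool) \<Rightarrow> real \<Rightarrow> real \<Rightarrow> (real \<Rightarrow> 'a) \<Rightarrow> 'a \<Rightarrow> 'a \<Rightarrow> bool" where
  "timelike_curve_from_to ll a b \<gamma> p q \<longleftrightarrow> a < b \<and> fd_timelike_curve ll {a..b} \<gamma> \<and> \<gamma> a = p \<and> \<gamma> b = q"

definition partition :: "real \<Rightarrow> real \<Rightarrow> nat \<Rightarrow> (nat \<Rightarrow> real) \<Rightarrow> bool" where
  "partition a b N t \<longleftrightarrow> N \<ge> 1 \<and> t 0 = a \<and> t N = b \<and> (\<forall>i<N. t i < t (Suc i))"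

definition L_tau :: "('a \<Rightarrow> 'a \<Rightarrow> ennreal) \<Rightarrow> real \<Rightarrow> real \<Rightarrow> (real \<Rightarrow> 'a) \<Rightarrow> ennreal" where
  "L_tau tau a b \<gamma> = Inf {(\<Sum>i<N. tau (\<gamma> (t i)) (\<gamma> (t (Suc i)))) | N t. partition a b N t}"

definition arclength :: "real set \<Rightarrow> (real \<Rightarrow> 'a::metric_space) \<Rightarrow> ennreal" where
  "arclength I \<gamma> = Sup {(\<Sum>i<N. ennreal (dist (\<gamma> (t i)) (\<gamma> (t (Suc i))))) | N t.
       (\<forall>i\<le>N. t i \<in> I) \<and> (\<forall>i<N. t i < t (Suc i))}"

definition causally_path_connected :: "('a::metric_space \<Rightarrow> 'a \<Rightarrow> bool) \<Rightarrow> ('a \<Rightarrow> 'a \<Rightarrow> bool) \<Rightarrow> bool" where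
  "causally_path_connected ll le \<longleftrightarrow>
     (\<forall>x y. le x y \<and> x \<noteq> y \<longrightarrow> (\<exists>a b \<gamma>. causal_curve_from_to le a b \<gamma> x y)) \<and>
     (\<forall>x y. ll x y \<longrightarrow> (\<exists>a b \<gamma>. timelike_curve_from_to ll a b \<gamma> x y))"

definition le_in :: "('a::metric_space \<Rightarrow> 'a \<Rightarrow> bool) \<Rightarrow> 'a set \<Rightarrow> 'a \<Rightarrow> 'a \<Rightarrow> bool" where
  "le_in le U p q \<longleftrightarrow> p = q \<or> (\<exists>a b \<gamma>. causal_curve_from_to le a b \<gamma> p q \<and> \<gamma> ` {a..b} \<subseteq> U)"

definition causally_closed_nbhd :: "('a::metric_space \<Rightarrow> 'a \<Rightarrow> bool) \<Rightarrow> 'a set \<Rightarrow> bool" where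
  "causally_closed_nbhd le U \<longleftrightarrow>
     (\<forall>P Q p q. (\<forall>n. le_in le U (P n) (Q n)) \<and> P \<longlonglongrightarrow> p \<and> Q \<longlonglongrightarrow> q \<and> p \<in> U \<and> q \<in> U
        \<longrightarrow> le_in le U p q)"

definition locally_causally_closed :: "('a::metric_space \<Rightarrow> 'a \<Rightarrow> bool) \<Rightarrow> bool" where
  "locally_causally_closed le \<longleftrightarrow> (\<forall>x. \<exists>U. open U \<and> x \<in> U \<and> causally_closed_nbhd le U)"

definition localizable :: "('a::metric_space \<Rightarrow> 'a \<Rightarrow> bool) \<Rightarrow> ('a \<Rightarrow> 'a \<Rightarrow> bool)
    \<Rightarrow> ('a \<Rightarrow> 'a \<Rightarrow> ennreal) \<Rightarrow> bool" where
  "localizable ll le tau \<longleftrightarrow> (\<forall>x. \<exists>\<Omega> (\<omega>::'a \<Rightarrow> 'a \<Rightarrow> real). x \<in> interior \<Omega> \<and>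
     \<comment> \<open>(i)\<close>
     (\<exists>C::real. \<forall>I \<gamma>. fd_causal_curve le I \<gamma> \<and> \<gamma> ` I \<subseteq> \<Omega> \<longrightarrow> arclength I \<gamma> \<le> ennreal C) \<and>
     \<comment> \<open>(ii)\<close>
     continuous_on (\<Omega> \<times> \<Omega>) (\<lambda>(p,q). \<omega> p q) \<and> (\<forall>p\<in>\<Omega>. \<forall>q\<in>\<Omega>. \<omega> p q \<ge> 0) \<and>
     lpls_on \<Omega> ll le (\<lambda>p q. ennreal (\<omega> p q)) \<and>
     (\<forall>y\<in>\<Omega>. Ifut ll y \<inter> \<Omega> \<noteq> {} \<and> Ipast ll y \<inter> \<Omega> \<noteq> {}) \<and>
     \<comment> \<open>(iii)\<close>
     (\<forall>p\<in>\<Omega>. \<forall>q\<in>\<Omega>. le p q \<and> p \<noteq> q \<longrightarrow>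
        (\<exists>a b \<gamma>. causal_curve_from_to le a b \<gamma> p q \<and>
           (\<forall>a' b' \<gamma>'. causal_curve_from_to le a' b' \<gamma>' p q \<and> \<gamma>' ` {a'..b'} \<subseteq> \<Omega> \<longrightarrow>
               L_tau tau a' b' \<gamma>' \<le> L_tau tau a b \<gamma>) \<and>
           L_tau tau a b \<gamma> = ennreal (\<omega> p q))))"

definition lorentzian_length_space :: "('a::metric_space \<Rightarrow> 'a \<Rightarrow> bool) \<Rightarrow> ('a \<Rightarrow> 'a \<Rightarrow> bool)
    \<Rightarrow> ('a \<Rightarrow> 'a \<Rightarrow> ennreal) \<Rightarrow> bool" where
  "lorentzian_length_space ll le tau \<longleftrightarrow>
     lpls ll le tau \<and> causally_path_connected ll le \<and> locally_causally_closed le \<and>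
     localizable ll le tau \<and>
     (\<forall>x y. tau x y = Sup {L_tau tau a b \<gamma> | a b \<gamma>. causal_curve_from_to le a b \<gamma> x y})"

definition causal :: "('a \<Rightarrow> 'a \<Rightarrow> bool) \<Rightarrow> bool" where
  "causal le \<longleftrightarrow> (\<forall>x y. le x y \<and> le y x \<longrightarrow> x = y)"

definition non_totally_imprisoning :: "('a::metric_space \<Rightarrow> 'a \<Rightarrow> bool) \<Rightarrow> bool" where
  "non_totally_imprisoning le \<longleftrightarrow> (\<forall>K. compact K \<longrightarrow> (\<exists>C::real. C \<ge> 0 \<and>
      (\<forall>I \<gamma>. fd_causal_curve le I \<gamma> \<and> \<gamma> ` I \<subseteq> K \<longrightarrow> arclength I \<gamma> \<le> ennreal C)))"

definition globally_hyperbolic :: "('a::metric_space \<Rightarrow> 'a \<Rightarrow> bool) \<Rightarrow> bool" where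
  "globally_hyperbolic le \<longleftrightarrow> non_totally_imprisoning le \<and>
     (\<forall>x y. compact (Jfut le x \<inter> Jpast le y))"

definition causally_simple :: "('a::topological_space \<Rightarrow> 'a \<Rightarrow> bool) \<Rightarrow> bool" where
  "causally_simple le \<longleftrightarrow> causal le \<and> (\<forall>x. closed (Jfut le x) \<and> closed (Jpast le x))"

definition distinguishing :: "('a \<Rightarrow> 'a \<Rightarrow> bool) \<Rightarrow> bool" where
  "distinguishing ll \<longleftrightarrow> (\<forall>x y. Ifut ll x = Ifut ll y \<longrightarrow> x = y) \<and>
                         (\<forall>x y. Ipast ll x = Ipast ll y \<longrightarrow> x = y)"

definition reflective :: "('a \<Rightarrow> 'a \<Rightarrow> bool) \<Rightarrow> bool" where
  "reflective ll \<longleftrightarrow> (\<forall>x y. (Ifut ll x \<subseteq> Ifut ll y \<longrightarrow> Ipast ll y \<subseteq> Ipast ll x) \<and>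
                             (Ipast ll y \<subseteq> Ipast ll x \<longrightarrow> Ifut ll x \<subseteq> Ifut ll y))"

definition causally_continuous :: "('a \<Rightarrow> 'a \<Rightarrow> bool) \<Rightarrow> bool" where
  "causally_continuous ll \<longleftrightarrow> distinguishing ll \<and> reflective ll"

definition Kplus :: "('a::topological_space \<Rightarrow> 'a \<Rightarrow> bool) \<Rightarrow> ('a \<times> 'a) set" where
  "Kplus le = \<Inter> {R. trans R \<and> closed R \<and> {(x,y). le x y} \<subseteq> R}"

definition stably_causal :: "('a::topological_space \<Rightarrow> 'a \<Rightarrow> bool) \<Rightarrow> bool" where
  "stably_causal le \<longleftrightarrow> antisym (Kplus le)"

definition strongly_causal :: "('a::topological_space \<Rightarrow> 'a \<Rightarrow> bool) \<Rightarrow> bool" where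
  "strongly_causal ll \<longleftrightarrow>
     (\<forall>U. generate_topology {Ifut ll x \<inter> Ipast ll y | x y. True} U \<longleftrightarrow> open U)"

end

theory Submission
  imports Defs
begin


lemma lls_lpls: "lorentzian_length_space ll le tau \<Longrightarrow> lpls ll le tau"
  unfolding lorentzian_length_space_def by (rule conjunct1)

lemma lpls_parts:
  assumes "lpls ll le tau"
  shows "causal_space_on UNIV ll le" "lsc_on (UNIV \<times> UNIV) (\<lambda>(x,y). tau x y)"
   "\<forall>x\<in>UNIV. \<forall>y\<in>UNIV. \<forall>z\<in>UNIV. le x y \<longrightarrow> le y z \<longrightarrow> tau x z \<ge> tau x y + tau y z"
   "\<forall>x\<in>UNIV. \<forall>y\<in>UNIV. tau x y > 0 \<longleftrightarrow> ll x y"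
  using assms unfolding lpls_on_def by - (elim conjE, assumption)+

lemma cs_parts:
  assumes "causal_space_on UNIV ll le"
  shows "\<forall>x\<in>UNIV. \<forall>y\<in>UNIV. \<forall>z\<in>UNIV. le x y \<longrightarrow> le y z \<longrightarrow> le x z"
     "\<forall>x\<in>UNIV. le x x" "\<forall>x\<in>UNIV. \<forall>y\<in>UNIV. ll x y \<longrightarrow> le x y"
  using assms unfolding causal_space_on_def by - (elim conjE, assumption)+

lemma lls_basic:
  assumes "lorentzian_length_space ll le tau"
  shows lls_trans: "\<And>x y z. le x y \<Longrightarrow> le y z \<Longrightarrow> le x z"
    and lls_refl: "\<And>x. le x x"
    and lls_llle: "\<And>x y. ll x y \<Longrightarrow> le x y"
    and lls_pos: "\<And>x y. tau x y > 0 \<longleftrightarrow> ll x y"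
    and lls_rti: "\<And>x y z. le x y \<Longrightarrow> le y z \<Longrightarrow> tau x z \<ge> tau x y + tau y z"
    and lls_lsc: "lsc_on (UNIV \<times> UNIV) (\<lambda>(x,y). tau x y)"
proof -
  note l = lpls_parts[OF lls_lpls[OF assms]]
  note c = cs_parts[OF l(1)]
  show "\<And>x y z. le x y \<Longrightarrow> le y z \<Longrightarrow> le x z" using c(1) by blast
  show "\<And>x. le x x" using c(2) by blast
  show "\<And>x y. ll x y \<Longrightarrow> le x y" using c(3) by blast
  show "\<And>x y. tau x y > 0 \<longleftrightarrow> ll x y" using l(4) by blast
  show "\<And>x y z. le x y \<Longrightarrow> le y z \<Longrightarrow> tau x z \<ge> tau x y + tau y z" using l(3) by blast
  show "lsc_on (UNIV \<times> UNIV) (\<lambda>(x,y). tau x y)" by (rule l(2))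
qed

lemma lls_push1:
  assumes "lorentzian_length_space ll le tau" "le x y" "ll y z" shows "ll x z"
proof -
  have "le y z" using lls_llle[OF assms(1)] assms(3) .
  then have 1: "tau x y + tau y z \<le> tau x z" using lls_rti[OF assms(1)] assms(2) by blast
  have 2: "tau y z > 0" using lls_pos[OF assms(1)] assms(3) by blast
  have 3: "tau y z \<le> tau x y + tau y z" by (rule add_increasing) simp_all
  have "tau x z > 0" using 1 2 3 by (meson order_less_le_trans)
  then show ?thesis using lls_pos[OF assms(1)] by blast
qed

lemma lls_push2:
  assumes "lorentzian_length_space ll le tau" "ll x y" "le y z" shows "ll x z"
proof -
  have "le x y" using lls_llle[OF assms(1)] assms(2) .
  then have 1: "tau x y + tau y z \<le> tau x z" using lls_rti[OF assms(1)] assms(3) by blast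
  have 2: "tau x y > 0" using lls_pos[OF assms(1)] assms(2) by blast
  have 3: "tau x y \<le> tau x y + tau y z" by (rule add_increasing2) simp_all
  have "tau x z > 0" using 1 2 3 by (meson order_less_le_trans)
  then show ?thesis using lls_pos[OF assms(1)] by blast
qed

lemma lls_open_Ifut:
  assumes "lorentzian_length_space ll le tau" shows "open (Ifut ll x)"
proof (subst open_subopen, intro ballI)
  fix y assume "y \<in> Ifut ll x"
  then have "tau x y > 0" using lls_pos[OF assms] by (auto simp: Ifut_def)
  moreover have "\<forall>z\<in>UNIV \<times> UNIV. \<forall>c. c < (\<lambda>(x,y). tau x y) z \<longrightarrow>
      (\<exists>U. open U \<and> z \<in> U \<and> (\<forall>w\<in>U \<inter> (UNIV \<times> UNIV). c < (\<lambda>(x,y). tau x y) w))"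
    using lls_lsc[OF assms] unfolding lsc_on_def .
  ultimately obtain U where U: "open U" "(x,y) \<in> U" "\<forall>w\<in>U \<inter> (UNIV \<times> UNIV). 0 < (\<lambda>(x,y). tau x y) w"
    by (metis UNIV_I mem_Sigma_iff case_prod_conv)
  have "open (Pair x -` U)"
    by (rule open_vimage[OF U(1)]) (intro continuous_intros)
  moreover have "Pair x -` U \<subseteq> Ifut ll x" using U(3) lls_pos[OF assms] by (auto simp: Ifut_def)
  ultimately show "\<exists>T. open T \<and> y \<in> T \<and> T \<subseteq> Ifut ll x" using U(2) by blast
qed

lemma lls_open_Ipast:
  assumes "lorentzian_length_space ll le tau" shows "open (Ipast ll x)"
proof (subst open_subopen, intro ballI)
  fix y assume "y \<in> Ipast ll x"
  then have "tau y x > 0" using lls_pos[OF assms] by (auto simp: Ipast_def)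
  moreover have "\<forall>z\<in>UNIV \<times> UNIV. \<forall>c. c < (\<lambda>(x,y). tau x y) z \<longrightarrow>
      (\<exists>U. open U \<and> z \<in> U \<and> (\<forall>w\<in>U \<inter> (UNIV \<times> UNIV). c < (\<lambda>(x,y). tau x y) w))"
    using lls_lsc[OF assms] unfolding lsc_on_def .
  ultimately obtain U where U: "open U" "(y,x) \<in> U" "\<forall>w\<in>U \<inter> (UNIV \<times> UNIV). 0 < (\<lambda>(x,y). tau x y) w"
    by (metis UNIV_I mem_Sigma_iff case_prod_conv)
  have "open ((\<lambda>z. (z,x)) -` U)"
    by (rule open_vimage[OF U(1)]) (intro continuous_intros)
  moreover have "(\<lambda>z. (z,x)) -` U \<subseteq> Ipast ll x" using U(3) lls_pos[OF assms] by (auto simp: Ipast_def)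
  ultimately show "\<exists>T. open T \<and> y \<in> T \<and> T \<subseteq> Ipast ll x" using U(2) by blast
qed

lemma loc_part:
  "localizable ll le tau \<Longrightarrow> \<exists>\<Omega>. x \<in> interior \<Omega> \<and> (\<forall>y\<in>\<Omega>. Ifut ll y \<inter> \<Omega> \<noteq> {} \<and> Ipast ll y \<inter> \<Omega> \<noteq> {})"
  unfolding localizable_def
  apply (erule allE[where x=x])
  apply (elim exE conjE)
  apply (rule exI, rule conjI, assumption, assumption)
  done

lemma lls_ex_fut:
  assumes "lorentzian_length_space ll le tau" shows "\<exists>y. ll x y" "\<exists>y. ll y x"
proof -
  have "localizable ll le tau" using assms unfolding lorentzian_length_space_def by (elim conjE)
  then obtain \<Omega> where "x \<in> interior \<Omega>" "\<forall>y\<in>\<Omega>. Ifut ll y \<inter> \<Omega> \<noteq> {} \<and> Ipast ll y \<inter> \<Omega> \<noteq> {}"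
    using loc_part by blast
  then have "Ifut ll x \<noteq> {}" "Ipast ll x \<noteq> {}" using interior_subset by blast+
  then show "\<exists>y. ll x y" "\<exists>y. ll y x" by (auto simp: Ifut_def Ipast_def)
qed

lemma lls_cpc: "lorentzian_length_space ll le tau \<Longrightarrow> causally_path_connected ll le"
  unfolding lorentzian_length_space_def by (elim conjE)

lemma cpc_tl: "causally_path_connected ll le \<Longrightarrow> ll x y \<Longrightarrow> \<exists>a b \<gamma>. timelike_curve_from_to ll a b \<gamma> x y"
proof -
  assume a: "causally_path_connected ll le" "ll x y"
  have "\<forall>x y. ll x y \<longrightarrow> (\<exists>a b \<gamma>. timelike_curve_from_to ll a b \<gamma> x y)"
    using a(1) unfolding causally_path_connected_def by (rule conjunct2)
  then show ?thesis using a(2) by blast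
qed

lemma tl_parts:
  assumes "timelike_curve_from_to ll a b \<gamma> x y"
  shows "a < b" "\<exists>C. C-lipschitz_on {a..b} \<gamma>" "\<gamma> a = x" "\<gamma> b = y"
    "\<forall>s\<in>{a..b}. \<forall>t\<in>{a..b}. s < t \<longrightarrow> ll (\<gamma> s) (\<gamma> t)"
  using assms unfolding timelike_curve_from_to_def fd_timelike_curve_def by - (elim conjE, assumption)+

lemma lls_tlcurve:
  assumes "lorentzian_length_space ll le tau" "ll x y"
  obtains a b \<gamma> C where "a < (b::real)" "C-lipschitz_on {a..b} \<gamma>" "\<gamma> a = x" "\<gamma> b = y"
    "\<And>s t. s \<in> {a..b} \<Longrightarrow> t \<in> {a..b} \<Longrightarrow> s < t \<Longrightarrow> ll (\<gamma> s) (\<gamma> t)"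
proof -
  obtain a b \<gamma> where tc: "timelike_curve_from_to ll a b \<gamma> x y"
    using cpc_tl[OF lls_cpc[OF assms(1)] assms(2)] by (elim exE)
  note h = tl_parts[OF tc]
  obtain C where Cl: "C-lipschitz_on {a..b} \<gamma>" using h(2) by (elim exE)
  have h5: "\<And>s t. s \<in> {a..b} \<Longrightarrow> t \<in> {a..b} \<Longrightarrow> s < t \<Longrightarrow> ll (\<gamma> s) (\<gamma> t)" using h(5) by blast
  show ?thesis by (rule that[OF h(1) Cl h(3) h(4) h5])
qed

lemma lls_tlcurve_ex:
  assumes "lorentzian_length_space ll le tau" "ll x y"
  shows "\<exists>a b C \<gamma>. a < (b::real) \<and> C-lipschitz_on {a..b} \<gamma> \<and> \<gamma> a = x \<and> \<gamma> b = y \<and>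
    (\<forall>s\<in>{a..b}. \<forall>t\<in>{a..b}. s < t \<longrightarrow> ll (\<gamma> s) (\<gamma> t))"
proof -
  obtain a b \<gamma> where tc: "timelike_curve_from_to ll a b \<gamma> x y"
    using cpc_tl[OF lls_cpc[OF assms(1)] assms(2)] by (elim exE)
  note h = tl_parts[OF tc]
  obtain C where Cl: "C-lipschitz_on {a..b} \<gamma>" using h(2) by (elim exE)
  show ?thesis using h(1) Cl h(3) h(4) h(5) by blast
qed

lemma lls_between:
  assumes "lorentzian_length_space ll le tau" "ll x z" shows "\<exists>y. ll x y \<and> ll y z"
proof -
  obtain a b C \<gamma> where c: "a < (b::real)" "C-lipschitz_on {a..b} \<gamma>" "\<gamma> a = x" "\<gamma> b = z"
    and c5: "\<forall>s\<in>{a..b}. \<forall>t\<in>{a..b}. s < t \<longrightarrow> ll (\<gamma> s) (\<gamma> t)"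
    using lls_tlcurve_ex[OF assms] by blast
  have m: "(a+b)/2 \<in> {a..b}" "a \<in> {a..b}" "b \<in> {a..b}" "a < (a+b)/2" "(a+b)/2 < b" using c(1) by auto
  have "ll (\<gamma> a) (\<gamma> ((a+b)/2))" using c5 m by blast
  moreover have "ll (\<gamma> ((a+b)/2)) (\<gamma> b)" using c5 m by blast
  ultimately have "ll x (\<gamma> ((a+b)/2))" "ll (\<gamma> ((a+b)/2)) z" using c(3,4) by simp_all
  then show ?thesis by blast
qed

lemma lls_near_fut:
  assumes "lorentzian_length_space ll le tau" "\<delta> > 0" shows "\<exists>y. ll x y \<and> dist x y < \<delta>"
proof -
  obtain q where "ll x q" using lls_ex_fut[OF assms(1)] by blast
  then obtain a b C \<gamma> where c: "a < (b::real)" "C-lipschitz_on {a..b} \<gamma>" "\<gamma> a = x" "\<gamma> b = q"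
    and c5: "\<forall>s\<in>{a..b}. \<forall>t\<in>{a..b}. s < t \<longrightarrow> ll (\<gamma> s) (\<gamma> t)"
    using lls_tlcurve_ex[OF assms(1)] by blast
  have C0: "C \<ge> 0" using c(2) lipschitz_on_nonneg by blast
  define s where "s = a + min (b - a) (\<delta> / (2 * (C + 1)))"
  have s: "a < s" "s \<le> b" using c(1) assms(2) C0 by (auto simp: s_def)
  have "ll x (\<gamma> s)" using c5 s c(1,3) by auto
  moreover have "dist x (\<gamma> s) \<le> C * dist a s"
    using lipschitz_onD[OF c(2), of a s] s c(1,3) by simp
  moreover have "C * dist a s < \<delta>"
  proof -
    have "dist a s \<le> \<delta> / (2 * (C + 1))" using s by (auto simp: s_def dist_real_def)
    then have "C * dist a s \<le> C * (\<delta> / (2 * (C + 1)))" by (rule mult_left_mono) (use C0 in auto)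
    also have "\<dots> < \<delta>" using C0 assms(2) by (simp add: field_simps) (use mult_nonneg_nonneg[of C \<delta>] C0 assms(2) in linarith)
    finally show ?thesis .
  qed
  ultimately show ?thesis by force
qed

lemma lls_near_past:
  assumes "lorentzian_length_space ll le tau" "\<delta> > 0" shows "\<exists>y. ll y x \<and> dist x y < \<delta>"
proof -
  obtain q where "ll q x" using lls_ex_fut[OF assms(1)] by blast
  then obtain a b C \<gamma> where c: "a < (b::real)" "C-lipschitz_on {a..b} \<gamma>" "\<gamma> a = q" "\<gamma> b = x"
    and c5: "\<forall>s\<in>{a..b}. \<forall>t\<in>{a..b}. s < t \<longrightarrow> ll (\<gamma> s) (\<gamma> t)"
    using lls_tlcurve_ex[OF assms(1)] by blast
  have C0: "C \<ge> 0" using c(2) lipschitz_on_nonneg by blast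
  define s where "s = b - min (b - a) (\<delta> / (2 * (C + 1)))"
  have s: "s < b" "a \<le> s" using c(1) assms(2) C0 by (auto simp: s_def)
  have "ll (\<gamma> s) x" using c5 s c(1,4) by auto
  moreover have "dist x (\<gamma> s) \<le> C * dist b s"
    using lipschitz_onD[OF c(2), of b s] s c(1,4) by simp
  moreover have "C * dist b s < \<delta>"
  proof -
    have "dist b s \<le> \<delta> / (2 * (C + 1))" using s by (auto simp: s_def dist_real_def)
    then have "C * dist b s \<le> C * (\<delta> / (2 * (C + 1)))" by (rule mult_left_mono) (use C0 in auto)
    also have "\<dots> < \<delta>" using C0 assms(2) by (simp add: field_simps) (use mult_nonneg_nonneg[of C \<delta>] C0 assms(2) in linarith)
    finally show ?thesis .
  qed
  ultimately show ?thesis by force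
qed



lemma lls_closed_Jfut:
  assumes L: "lorentzian_length_space ll le tau" and gh: "globally_hyperbolic le"
  shows "closed (Jfut le x)"
  unfolding closed_sequential_limits
proof (intro allI impI)
  fix Y y assume h: "(\<forall>n. Y n \<in> Jfut le x) \<and> Y \<longlonglongrightarrow> y"
  obtain z where z: "ll y z" using lls_ex_fut[OF L] by blast
  have ev: "eventually (\<lambda>n. Y n \<in> Ipast ll z) sequentially"
    using topological_tendstoD[OF _ lls_open_Ipast[OF L]] h z by (auto simp: Ipast_def)
  have "eventually (\<lambda>n. Y n \<in> Jfut le x \<inter> Jpast le z) sequentially"
    using ev h lls_llle[OF L] by (auto simp: Ipast_def Jpast_def elim!: eventually_mono)
  moreover have "closed (Jfut le x \<inter> Jpast le z)"
    using gh unfolding globally_hyperbolic_def by (simp add: compact_imp_closed)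
  ultimately show "y \<in> Jfut le x" using Lim_in_closed_set h by (metis IntD1 trivial_limit_sequentially)
qed

lemma lls_closed_Jpast:
  assumes L: "lorentzian_length_space ll le tau" and gh: "globally_hyperbolic le"
  shows "closed (Jpast le x)"
  unfolding closed_sequential_limits
proof (intro allI impI)
  fix Y y assume h: "(\<forall>n. Y n \<in> Jpast le x) \<and> Y \<longlonglongrightarrow> y"
  obtain z where z: "ll z y" using lls_ex_fut[OF L] by blast
  have ev: "eventually (\<lambda>n. Y n \<in> Ifut ll z) sequentially"
    using topological_tendstoD[OF _ lls_open_Ifut[OF L]] h z by (auto simp: Ifut_def)
  have "eventually (\<lambda>n. Y n \<in> Jfut le z \<inter> Jpast le x) sequentially"
    using ev h lls_llle[OF L] by (auto simp: Ifut_def Jfut_def elim!: eventually_mono)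
  moreover have "closed (Jfut le z \<inter> Jpast le x)"
    using gh unfolding globally_hyperbolic_def by (simp add: compact_imp_closed)
  ultimately show "y \<in> Jpast le x" using Lim_in_closed_set h by (metis IntD2 trivial_limit_sequentially)
qed

lemma cos_lip: "\<bar>cos u - cos v\<bar> \<le> \<bar>u - v\<bar>" for u v :: real
proof -
  have s1: "\<bar>sin ((u+v)/2)\<bar> \<le> 1" by simp
  have s2: "\<bar>sin ((v-u)/2)\<bar> \<le> \<bar>u-v\<bar>/2" using abs_sin_x_le_abs_x[of "(v-u)/2"] by simp
  have "\<bar>cos u - cos v\<bar> = 2 * (\<bar>sin ((u+v)/2)\<bar> * \<bar>sin ((v-u)/2)\<bar>)"
    by (simp add: cos_diff_cos abs_mult)
  also have "\<dots> \<le> 2 * (1 * (\<bar>u-v\<bar>/2))"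
    by (intro mult_left_mono mult_mono s1 s2) auto
  also have "\<dots> = \<bar>u - v\<bar>" by simp
  finally show ?thesis .
qed

lemma lls_gh_causal:
  assumes L: "lorentzian_length_space ll le tau" and gh: "globally_hyperbolic le"
  shows "causal le"
  unfolding causal_def
proof (rule ccontr)
  assume "\<not> (\<forall>x y. le x y \<and> le y x \<longrightarrow> x = y)"
  then obtain x y where xy: "le x y" "le y x" "x \<noteq> y" by blast
  then obtain a b c where cc: "causal_curve_from_to le a b c x y"
    using L unfolding lorentzian_length_space_def causally_path_connected_def by blast
  then obtain C where ab: "a < b" and C: "C-lipschitz_on {a..b} c" and cx: "c a = x" and cy: "c b = y"
    and cle: "\<And>s t. s \<in> {a..b} \<Longrightarrow> t \<in> {a..b} \<Longrightarrow> s < t \<Longrightarrow> le (c s) (c t)"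
    unfolding causal_curve_from_to_def fd_causal_curve_def by blast
  have C0: "C \<ge> 0" using C lipschitz_on_nonneg by blast
  have mut: "le x (c s) \<and> le (c s) y" if "s \<in> {a..b}" for s
  proof -
    have "le x (c s)" using that cle[of a s] cx lls_refl[OF L] ab by (cases "s = a") auto
    moreover have "le (c s) y" using that cle[of s b] cy lls_refl[OF L] ab by (cases "s = b") auto
    ultimately show ?thesis by blast
  qed
  define h where "h t = a + (b - a) * ((1 - cos (pi * t)) / 2)" for t
  define g where "g t = c (h t)" for t
  have hr: "h t \<in> {a..b}" for t
  proof -
    have c1: "-1 \<le> cos (pi * t)" "cos (pi * t) \<le> 1" by simp_all
    have "0 \<le> (b - a) * ((1 - cos (pi * t)) / 2)"
      by (rule mult_nonneg_nonneg) (use ab c1 in auto)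
    moreover have "(b - a) * ((1 - cos (pi * t)) / 2) \<le> (b - a) * 1"
      by (rule mult_left_mono) (use ab c1 in auto)
    ultimately show ?thesis by (auto simp: h_def)
  qed
  have gle: "le (g s) (g t)" for s t
    using mut[OF hr[of s]] mut[OF hr[of t]] xy(2) lls_trans[OF L] unfolding g_def by metis
  have hlip: "dist (h s) (h t) \<le> ((b - a) / 2 * pi) * dist s t" for s t
  proof -
    have e: "h s - h t = (b - a) / 2 * (cos (pi * t) - cos (pi * s))"
      unfolding h_def by (simp add: field_simps)
    have "dist (h s) (h t) = \<bar>(b - a) / 2\<bar> * \<bar>cos (pi * t) - cos (pi * s)\<bar>"
      unfolding dist_real_def e abs_mult ..
    also have "\<bar>(b - a) / 2\<bar> = (b - a) / 2" using ab by simp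
    finally have "dist (h s) (h t) = (b - a) / 2 * \<bar>cos (pi * t) - cos (pi * s)\<bar>" .
    also have "\<dots> \<le> (b - a) / 2 * \<bar>pi * t - pi * s\<bar>"
      using ab by (intro mult_left_mono cos_lip) auto
    also have "\<dots> = ((b - a) / 2 * pi) * dist s t"
    proof -
      have "pi * t - pi * s = pi * (t - s)" by (simp add: algebra_simps)
      then have p: "\<bar>pi * t - pi * s\<bar> = pi * dist s t"
        by (simp add: abs_mult dist_real_def abs_minus_commute)
      show ?thesis unfolding p by (simp add: mult.assoc)
    qed
    finally show ?thesis .
  qed
  have glip: "(C * ((b - a) / 2 * pi))-lipschitz_on {0..} g"
    unfolding lipschitz_on_def
  proof (intro conjI ballI)
    show "0 \<le> C * ((b - a) / 2 * pi)" using C0 ab by simp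
    fix s t :: real
    have "dist (g s) (g t) \<le> C * dist (h s) (h t)"
      using C hr unfolding g_def lipschitz_on_def by blast
    also have "\<dots> \<le> C * (((b - a) / 2 * pi) * dist s t)" using hlip C0 by (intro mult_left_mono) auto
    finally show "dist (g s) (g t) \<le> C * ((b - a) / 2 * pi) * dist s t" by (simp add: mult.assoc)
  qed
  have gn: "g (real n) = (if even n then x else y)" for n
  proof -
    have "cos (pi * real n) = (-1) ^ n" by simp
    then show ?thesis by (cases "even n") (auto simp: g_def h_def cx cy)
  qed
  have fd: "fd_causal_curve le {0..} g"
    unfolding fd_causal_curve_def
  proof (intro conjI)
    show "is_interval {0::real..}" by (simp add: is_interval_ci)
    show "\<exists>C. C-lipschitz_on {0..} g" using glip by blast
    show "\<exists>s\<in>{0..}. \<exists>t\<in>{0..}. g s \<noteq> g t"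
      using gn[of 0] gn[of 1] xy(3) by (intro bexI[of _ 0] bexI[of _ 1]) auto
    show "\<forall>s\<in>{0..}. \<forall>t\<in>{0..}. s < t \<longrightarrow> le (g s) (g t)" using gle by blast
  qed
  define K where "K = c ` {a..b}"
  have "compact K" unfolding K_def
    by (intro compact_continuous_image lipschitz_on_continuous_on[OF C]) auto
  then obtain B where B: "B \<ge> 0" "\<And>I \<gamma>. fd_causal_curve le I \<gamma> \<and> \<gamma> ` I \<subseteq> K \<Longrightarrow> arclength I \<gamma> \<le> ennreal B"
    using gh unfolding globally_hyperbolic_def non_totally_imprisoning_def by blast
  have "g ` {0..} \<subseteq> K" using hr unfolding K_def g_def by auto
  then have bnd: "arclength {0..} g \<le> ennreal B" using B(2) fd by blast
  define d where "d = dist x y"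
  have d0: "d > 0" using xy(3) by (simp add: d_def)
  have "ennreal (real N * d) \<le> arclength {0..} g" for N
  proof -
    have dd: "dist (g (real i)) (g (real (Suc i))) = d" for i
      using gn[of i] gn[of "Suc i"] by (cases "even i") (auto simp: d_def dist_commute)
    have "(\<Sum>i<N. ennreal (dist (g (real i)) (g (real (Suc i))))) \<in>
      {(\<Sum>i<N. ennreal (dist (g (t i)) (g (t (Suc i))))) | N t.
       (\<forall>i\<le>N. t i \<in> {0..}) \<and> (\<forall>i<N. t i < t (Suc i))}" by fastforce
    then have "(\<Sum>i<N. ennreal (dist (g (real i)) (g (real (Suc i))))) \<le> arclength {0..} g"
      unfolding arclength_def by (rule Sup_upper)
    moreover have "(\<Sum>i<N. ennreal (dist (g (real i)) (g (real (Suc i))))) = ennreal (real N * d)"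
    proof -
      have "(\<Sum>i<N. ennreal (dist (g (real i)) (g (real (Suc i))))) = (\<Sum>i<N. ennreal d)"
        by (rule sum.cong[OF refl]) (rule arg_cong[where f=ennreal, OF dd])
      also have "\<dots> = of_nat N * ennreal d" by simp
      also have "\<dots> = ennreal (real N * d)"
        using d0 by (simp add: ennreal_mult ennreal_of_nat_eq_real_of_nat)
      finally show ?thesis .
    qed
    ultimately show ?thesis by simp
  qed
  then have "ennreal (real N * d) \<le> ennreal B" for N using bnd order_trans by blast
  then have le: "real N * d \<le> B" for N using B(1) by (simp add: ennreal_le_iff)
  obtain N :: nat where "B / d < real N" using reals_Archimedean2 by blast
  then have "B < real N * d" using d0 by (simp add: field_simps)
  then show False using le[of N] by simp
qed

lemma part_A:
  assumes L: "lorentzian_length_space ll le tau" and gh: "globally_hyperbolic le"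
  shows "causally_simple le"
  unfolding causally_simple_def using lls_gh_causal[OF L gh] lls_closed_Jfut[OF L gh] lls_closed_Jpast[OF L gh] by blast



lemma lls_cl_Ifut:
  assumes L: "lorentzian_length_space ll le tau" shows "x \<in> closure (Ifut ll x)"
  unfolding closure_approachable using lls_near_fut[OF L] by (fastforce simp: Ifut_def dist_commute)

lemma lls_cl_Ipast:
  assumes L: "lorentzian_length_space ll le tau" shows "x \<in> closure (Ipast ll x)"
  unfolding closure_approachable using lls_near_past[OF L] by (fastforce simp: Ipast_def dist_commute)

lemma part_B:
  assumes L: "lorentzian_length_space ll le tau" and cs: "causally_simple le"
  shows "causally_continuous ll"
proof -
  have ca: "\<And>x y. le x y \<Longrightarrow> le y x \<Longrightarrow> x = y" using cs unfolding causally_simple_def causal_def by blast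
  have cf: "closure (Ifut ll y) \<subseteq> Jfut le y" for y
    using cs lls_llle[OF L] unfolding causally_simple_def
    by (intro closure_minimal) (auto simp: Ifut_def Jfut_def)
  have cp: "closure (Ipast ll y) \<subseteq> Jpast le y" for y
    using cs lls_llle[OF L] unfolding causally_simple_def
    by (intro closure_minimal) (auto simp: Ipast_def Jpast_def)
  have f1: "le y x" if "Ifut ll x \<subseteq> Ifut ll y" for x y
  proof -
    have "x \<in> closure (Ifut ll y)" using lls_cl_Ifut[OF L, of x] closure_mono[OF that] by blast
    then show ?thesis using cf by (auto simp: Jfut_def)
  qed
  have p1: "le y x" if "Ipast ll y \<subseteq> Ipast ll x" for x y
  proof -
    have "y \<in> closure (Ipast ll x)" using lls_cl_Ipast[OF L, of y] closure_mono[OF that] by blast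
    then show ?thesis using cp by (auto simp: Jpast_def)
  qed
  have "distinguishing ll"
    unfolding distinguishing_def using f1 p1 ca by (metis order_refl)
  moreover have "reflective ll"
    unfolding reflective_def
  proof (intro allI conjI impI)
    fix x y
    assume "Ifut ll x \<subseteq> Ifut ll y"
    then have "le y x" by (rule f1)
    then show "Ipast ll y \<subseteq> Ipast ll x" using lls_push2[OF L] by (auto simp: Ipast_def)
  next
    fix x y
    assume "Ipast ll y \<subseteq> Ipast ll x"
    then have "le y x" by (rule p1)
    then show "Ifut ll x \<subseteq> Ifut ll y" using lls_push1[OF L] by (auto simp: Ifut_def)
  qed
  ultimately show ?thesis unfolding causally_continuous_def by blast
qed

lemma part_C:
  assumes L: "lorentzian_length_space ll le tau" and cc: "causally_continuous ll"
  shows "stably_causal le"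
proof -
  have refl: "\<And>x w. Ipast ll x \<subseteq> Ipast ll w \<Longrightarrow> Ifut ll w \<subseteq> Ifut ll x"
    using cc unfolding causally_continuous_def reflective_def by blast
  have dist: "\<And>x y. Ifut ll x = Ifut ll y \<Longrightarrow> x = y"
    using cc unfolding causally_continuous_def distinguishing_def by blast
  define D where "D = {(x,y). Ifut ll y \<subseteq> Ifut ll x}"
  have "trans D" unfolding D_def trans_def by blast
  moreover have "{(x,y). le x y} \<subseteq> D" unfolding D_def using lls_push1[OF L] by (auto simp: Ifut_def)
  moreover have "closed D"
    unfolding closed_sequential_limits
  proof (intro allI impI)
    fix P and l :: "'a \<times> 'a"
    assume h: "(\<forall>n. P n \<in> D) \<and> P \<longlonglongrightarrow> l"
    obtain x y where l: "l = (x,y)" by fastforce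
    define X where "X n = fst (P n)" for n
    define Y where "Y n = snd (P n)" for n
    have X: "X \<longlonglongrightarrow> x" unfolding X_def using tendsto_fst[of P l] h l by simp
    have Y: "Y \<longlonglongrightarrow> y" unfolding Y_def using tendsto_snd[of P l] h l by simp
    have XY: "Ifut ll (Y n) \<subseteq> Ifut ll (X n)" for n using h unfolding D_def X_def Y_def
      by (metis (mono_tags, lifting) case_prodD mem_Collect_eq prod.collapse)
    have "Ifut ll y \<subseteq> Ifut ll x"
    proof
      fix z assume "z \<in> Ifut ll y"
      then obtain w where w: "ll y w" "ll w z" using lls_between[OF L] by (auto simp: Ifut_def)
      have evY: "eventually (\<lambda>n. Y n \<in> Ipast ll w) sequentially"
        using topological_tendstoD[OF Y lls_open_Ipast[OF L]] w by (auto simp: Ipast_def)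
      have evX: "eventually (\<lambda>n. ll (X n) w) sequentially"
        using evY XY by (auto simp: Ipast_def Ifut_def elim!: eventually_mono)
      have "Ipast ll x \<subseteq> Ipast ll w"
      proof
        fix q assume "q \<in> Ipast ll x"
        then have "eventually (\<lambda>n. X n \<in> Ifut ll q) sequentially"
          using topological_tendstoD[OF X lls_open_Ifut[OF L]] by (auto simp: Ipast_def Ifut_def)
        then have "eventually (\<lambda>n. ll q (X n) \<and> ll (X n) w) sequentially"
          using evX by (auto simp: Ifut_def elim: eventually_elim2)
        then have "\<exists>n. ll q (X n) \<and> ll (X n) w" by (rule eventually_happens'[OF trivial_limit_sequentially])
        then obtain n where "ll q (X n)" "ll (X n) w" by blast
        then have "ll q w" using lls_push1[OF L] lls_llle[OF L] by blast
        then show "q \<in> Ipast ll w" by (simp add: Ipast_def)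
      qed
      then have "Ifut ll w \<subseteq> Ifut ll x" by (rule refl)
      then show "z \<in> Ifut ll x" using w by (auto simp: Ifut_def)
    qed
    then show "l \<in> D" unfolding D_def l by simp
  qed
  ultimately have "Kplus le \<subseteq> D" unfolding Kplus_def by blast
  then show ?thesis unfolding stably_causal_def antisym_def D_def using dist by blast
qed



lemma Kplus_closed: "closed (Kplus le)" unfolding Kplus_def by (intro closed_Inter) blast
lemma Kplus_le: "le x y \<Longrightarrow> (x,y) \<in> Kplus le" unfolding Kplus_def by blast

lemma lim_small:
  fixes x :: "nat \<Rightarrow> 'a::metric_space"
  assumes "\<And>n. dist p (x n) < inverse (real (Suc n))" shows "x \<longlonglongrightarrow> p"
proof -
  have g: "(\<lambda>n. inverse (real (Suc n))) \<longlonglongrightarrow> 0" by (rule LIMSEQ_inverse_real_of_nat)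
  have e: "eventually (\<lambda>n. norm (dist (x n) p) \<le> inverse (real (Suc n))) sequentially"
    by (intro always_eventually allI) (use assms in \<open>simp add: dist_commute less_imp_le\<close>)
  have "(\<lambda>n. dist (x n) p) \<longlonglongrightarrow> 0" by (rule Lim_null_comparison[OF e g])
  then show ?thesis using tendsto_dist_iff by blast
qed

lemma key_D:
  assumes L: "lorentzian_length_space ll le tau" and lc: "locally_compact_space (euclidean :: 'a topology)"
    and sc: "stably_causal le" and U: "open U" "(p::'a::metric_space) \<in> U"
  shows "\<exists>x y. ll x p \<and> ll p y \<and> Ifut ll x \<inter> Ipast ll y \<subseteq> U"
proof (rule ccontr)
  assume neg: "\<not> ?thesis"
  have "\<forall>x\<in>topspace (euclidean :: 'a topology). \<exists>U K. openin euclidean U \<and> compactin euclidean K \<and> x \<in> U \<and> U \<subseteq> K"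
    using lc unfolding locally_compact_space_def .
  moreover have tp: "p \<in> topspace (euclidean :: 'a topology)" by simp
  ultimately have "\<exists>U K. openin euclidean U \<and> compactin euclidean K \<and> p \<in> U \<and> U \<subseteq> K" by (rule bspec)
  then obtain V K where VK0: "openin euclidean V" "compactin euclidean K" "p \<in> V" "V \<subseteq> K" by blast
  have VK1: "open V" using VK0(1) by (simp only: open_openin)
  have VK2: "compact K" using VK0(2) by (simp only: compactin_euclidean_iff)
  note VK = VK1 VK2 VK0(3) VK0(4)
  obtain \<epsilon> where e: "\<epsilon> > 0" "ball p \<epsilon> \<subseteq> U" using U open_contains_ball by blast
  obtain \<epsilon>0 where e0: "\<epsilon>0 > 0" "ball p \<epsilon>0 \<subseteq> V" using VK open_contains_ball by blast
  define \<delta> where "\<delta> = min \<epsilon> \<epsilon>0 / 2"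
  have d1: "\<delta> > 0" "\<delta> < \<epsilon>" "\<delta> < \<epsilon>0" using e(1) e0(1) unfolding \<delta>_def by auto
  have "cball p \<delta> \<subseteq> ball p \<epsilon>0"
  proof
    fix z assume "z \<in> cball p \<delta>" then show "z \<in> ball p \<epsilon>0" using d1(3) by simp
  qed
  also have "\<dots> \<subseteq> K" using e0(2) VK(4) by (rule order_trans)
  finally have d: "\<delta> > 0" "\<delta> < \<epsilon>" "cball p \<delta> \<subseteq> K" using d1 by auto
  have mpos: "min \<delta> (inverse (real (Suc n))) > 0" for n using d(1) by simp
  have "\<forall>n. \<exists>x. ll x p \<and> dist p x < min \<delta> (inverse (real (Suc n)))"
    using lls_near_past[OF L mpos] by blast
  from choice[OF this] obtain x where x0: "\<forall>n. ll (x n) p \<and> dist p (x n) < min \<delta> (inverse (real (Suc n)))" by blast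
  have x: "\<And>n. ll (x n) p" "\<And>n. dist p (x n) < min \<delta> (inverse (real (Suc n)))" using x0 by blast+
  have "\<forall>n. \<exists>y. ll p y \<and> dist p y < min \<delta> (inverse (real (Suc n)))"
    using lls_near_fut[OF L mpos] by blast
  from choice[OF this] obtain y where y0: "\<forall>n. ll p (y n) \<and> dist p (y n) < min \<delta> (inverse (real (Suc n)))" by blast
  have y: "\<And>n. ll p (y n)" "\<And>n. dist p (y n) < min \<delta> (inverse (real (Suc n)))" using y0 by blast+
  have X: "x \<longlonglongrightarrow> p" by (rule lim_small) (use x(2) in simp)
  have Y: "y \<longlonglongrightarrow> p" by (rule lim_small) (use y(2) in simp)
  have "\<forall>n. \<exists>w. dist p w = \<delta> \<and> le (x n) w \<and> le w (y n)"
  proof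
    fix n
    have "\<not> Ifut ll (x n) \<inter> Ipast ll (y n) \<subseteq> ball p \<epsilon>"
    proof
      assume "Ifut ll (x n) \<inter> Ipast ll (y n) \<subseteq> ball p \<epsilon>"
      then have "Ifut ll (x n) \<inter> Ipast ll (y n) \<subseteq> U" using e(2) by (rule order_trans)
      then show False using neg x(1)[of n] y(1)[of n] by blast
    qed
    then obtain z where "z \<in> Ifut ll (x n) \<inter> Ipast ll (y n)" "z \<notin> ball p \<epsilon>" by blast
    then have z: "ll (x n) z" "ll z (y n)" "dist p z \<ge> \<epsilon>"
      by (simp_all add: Ifut_def Ipast_def not_less)
    obtain a b C \<gamma> where c: "a < (b::real)" "C-lipschitz_on {a..b} \<gamma>" "\<gamma> a = x n" "\<gamma> b = z"
      and c5: "\<forall>s\<in>{a..b}. \<forall>t\<in>{a..b}. s < t \<longrightarrow> ll (\<gamma> s) (\<gamma> t)"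
      using lls_tlcurve_ex[OF L z(1)] by blast
    have cont: "continuous_on {a..b} (\<lambda>t. dist p (\<gamma> t))"
      by (intro continuous_intros lipschitz_on_continuous_on[OF c(2)])
    have f1: "(\<lambda>t. dist p (\<gamma> t)) a \<le> \<delta>" using c(3) x(2)[of n] by simp
    have f2: "\<delta> \<le> (\<lambda>t. dist p (\<gamma> t)) b" using c(4) z(3) d(2) by simp
    obtain s where s: "a \<le> s" "s \<le> b" "dist p (\<gamma> s) = \<delta>"
      using IVT'[OF f1 f2 _ cont] c(1) by auto
    have "le (x n) (\<gamma> s)"
    proof (cases "s = a")
      case True then show ?thesis using c(3) lls_refl[OF L] by simp
    next
      case False then have "ll (\<gamma> a) (\<gamma> s)" using c5 s c(1) by auto
      then show ?thesis using c(3) lls_llle[OF L] by simp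
    qed
    moreover have "le (\<gamma> s) z"
    proof (cases "s = b")
      case True then show ?thesis using c(4) lls_refl[OF L] by simp
    next
      case False then have "ll (\<gamma> s) (\<gamma> b)" using c5 s c(1) by auto
      then show ?thesis using c(4) lls_llle[OF L] by simp
    qed
    then have "le (\<gamma> s) (y n)" using lls_trans[OF L _ lls_llle[OF L z(2)]] by blast
    ultimately show "\<exists>w. dist p w = \<delta> \<and> le (x n) w \<and> le w (y n)" using s(3) by blast
  qed
  from choice[OF this] obtain w where w0: "\<forall>n. dist p (w n) = \<delta> \<and> le (x n) (w n) \<and> le (w n) (y n)" by blast
  have w: "\<And>n. dist p (w n) = \<delta>" "\<And>n. le (x n) (w n)" "\<And>n. le (w n) (y n)" using w0 by blast+
  have wK: "\<forall>n. w n \<in> K" using w(1) d(3) by auto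
  obtain l r where lr: "l \<in> K" "strict_mono (r :: nat \<Rightarrow> nat)" "(w \<circ> r) \<longlonglongrightarrow> l"
    by (rule seq_compactE[OF compact_imp_seq_compact[OF VK(2)] wK])
  have t1: "(\<lambda>n. dist p ((w \<circ> r) n)) \<longlonglongrightarrow> dist p l" by (intro tendsto_intros lr(3))
  have "(\<lambda>n. dist p ((w \<circ> r) n)) = (\<lambda>n. \<delta>)" using w(1) by auto
  with t1 have "(\<lambda>n. \<delta>) \<longlonglongrightarrow> dist p l" by simp
  then have "dist p l = \<delta>" by (simp add: LIMSEQ_const_iff)
  then have lp: "l \<noteq> p" using d(1) by auto
  have KC: "\<And>P q. (\<forall>n. P n \<in> Kplus le) \<Longrightarrow> P \<longlonglongrightarrow> q \<Longrightarrow> q \<in> Kplus le"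
    using Kplus_closed[of le, unfolded closed_sequential_limits] by blast
  have t1: "(\<lambda>n. ((x \<circ> r) n, (w \<circ> r) n)) \<longlonglongrightarrow> (p, l)"
    by (intro tendsto_Pair lr(3) LIMSEQ_subseq_LIMSEQ[OF X lr(2)])
  have m1: "\<forall>n. ((x \<circ> r) n, (w \<circ> r) n) \<in> Kplus le" by (simp add: Kplus_le[of le, OF w(2)])
  have pl: "(p, l) \<in> Kplus le" by (rule KC[OF m1 t1])
  have t2: "(\<lambda>n. ((w \<circ> r) n, (y \<circ> r) n)) \<longlonglongrightarrow> (l, p)"
    by (intro tendsto_Pair lr(3) LIMSEQ_subseq_LIMSEQ[OF Y lr(2)])
  have m2: "\<forall>n. ((w \<circ> r) n, (y \<circ> r) n) \<in> Kplus le" by (simp add: Kplus_le[of le, OF w(3)])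
  have lpK: "(l, p) \<in> Kplus le" by (rule KC[OF m2 t2])
  have "antisym (Kplus le)" using sc unfolding stably_causal_def .
  then have "l = p" using pl lpK unfolding antisym_def by blast
  then show False using lp by simp
qed

lemma part_D:
  assumes L: "lorentzian_length_space ll le tau" and lc: "locally_compact_space (euclidean :: 'a topology)"
    and sc: "stably_causal le"
  shows "strongly_causal (ll :: 'a::metric_space \<Rightarrow> 'a \<Rightarrow> bool)"
  unfolding strongly_causal_def
proof (intro allI iffI)
  fix U :: "'a set"
  assume "generate_topology {Ifut ll x \<inter> Ipast ll y | x y. True} U"
  then show "open U"
    by (induction rule: generate_topology.induct)
       (auto intro: open_Int lls_open_Ifut[OF L] lls_open_Ipast[OF L])
next
  fix U :: "'a set"
  assume U: "open U"
  let ?S = "{Ifut ll x \<inter> Ipast ll y | x y. True}"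
  let ?F = "{B. B \<in> ?S \<and> B \<subseteq> U}"
  have "U = \<Union>?F"
  proof
    show "U \<subseteq> \<Union>?F"
    proof
      fix p assume "p \<in> U"
      then obtain x y where "ll x p" "ll p y" "Ifut ll x \<inter> Ipast ll y \<subseteq> U"
        using key_D[OF L lc sc U] by blast
      then show "p \<in> \<Union>?F" by (auto simp: Ifut_def Ipast_def)
    qed
  qed blast
  moreover have "generate_topology ?S (\<Union>?F)"
    by (rule generate_topology.UN) (auto intro: generate_topology.Basis)
  ultimately show "generate_topology ?S U" by simp
qed


theorem theorem3p16:
  fixes ll le :: "'a::metric_space \<Rightarrow> 'a \<Rightarrow> bool" and tau :: "'a \<Rightarrow> 'a \<Rightarrow> ennreal"
  assumes "lorentzian_length_space ll le tau"
  shows "(globally_hyperbolic le \<longrightarrow> causally_simple le) \<and>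
         (causally_simple le \<longrightarrow> causally_continuous ll) \<and>
         (causally_continuous ll \<longrightarrow> stably_causal le) \<and>
         (locally_compact_space (euclidean :: 'a topology) \<longrightarrow>
            (stably_causal le \<longrightarrow> strongly_causal ll))"
  using part_A[OF assms] part_B[OF assms] part_C[OF assms] part_D[OF assms] by blast

end
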